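(* Assume (A1), (A2) and (A4) of the context, and let the chain $(\bar z_k)_{k\ge0}$ start from an arbitrary initial distribution. For $n\ge1$ let $$\Sigma_n=\frac1n\sum_{k=1}^nG^{-1}\mathsf E\big[(g(\bar z_k)-\bar{\mathrm P}g(\bar z_{k-1}))(g(\bar z_k)-\bar{\mathrm P}g(\bar z_{k-1}))^\top\big]G^{-\top}.$$ Then, with an absolute constant $C$, $$\|\Sigma_n-\Sigma_\infty\|_{\mathrm{ch}}\le C\,\frac{\|G^{-1}\|_\infty^2\,t_{\mathrm{mix}}^3}{n(1-\gamma)^2}.$$
   Context: Finite $\mathcal S,\mathcal A$, $d=|\mathcal S||\mathcal A|$. (A1) deterministic reward $r\in[0,1]$, discount $\gamma\in(0,1)$, kernel $\mathrm P$; $Q^\star$ optimal, $V^\star(s)=\max_aQ^\star(s,a)$. Behavior policy $\pi_b$; $\mu$ stationary law of $(s_t,a_t)$ (with $\min\mu>0$), $D_\mu=\operatorname{diag}(\mu)$; $\bar z_t=(s_t,a_t,s_{t+1})$ is Markov on $\mathsf X=\mathcal S\times\mathcal A\times\mathcal S$ with kernel $\bar{\mathrm P}((s_2,a_2,s_2')\mid(s_1,a_1,s_1'))=\mathbf 1\{s_2=s_1'\}\pi_b(a_2\mid s_2)\mathrm P(s_2'\mid s_2,a_2)$, stationary law $\bar\mu$. (A2) $d_{\mathrm{tv}}(\bar{\mathrm P}^t(\cdot\mid x),\bar\mu)\le(1/4)^{\lfloor t/t_{\mathrm{mix}}\rfloor}$. (A4) unique optimal deterministic policy $\pi^\star$ with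 positive optimality gap. $\mathrm P^{\pi^\star}((s,a),(s',a'))=\mathrm P(s'\mid s,a)\mathbf 1\{a'=\pi^\star(s')\}$, $G=D_\mu(I-\gamma\mathrm P^{\pi^\star})$. Bellman noise $\boldsymbol\varepsilon(s,a,s')=e_{s,a}(r(s,a)+\gamma V^\star(s')-Q^\star(s,a))$; $g=\sum_{k\ge0}\bar{\mathrm P}^k\boldsymbol\varepsilon$ solves $g-\bar{\mathrm P}g=\boldsymbol\varepsilon$. $\Sigma_{\boldsymbol\varepsilon}=\mathsf E_{\bar\mu}[\boldsymbol\varepsilon_0\boldsymbol\varepsilon_0^\top]+\sum_{\ell\ge1}(\mathsf E_{\bar\mu}[\boldsymbol\varepsilon_0\boldsymbol\varepsilon_\ell^\top]+\mathsf E_{\bar\mu}[\boldsymbol\varepsilon_\ell\boldsymbol\varepsilon_0^\top])$ (long-run covariance along the stationary chain, $\boldsymbol\varepsilon_\ell=\boldsymbol\varepsilon(\bar z_\ell)$), $\Sigma_\infty=G^{-1}\Sigma_{\boldsymbol\varepsilon}G^{-\top}$. $\|M\|_{\mathrm{ch}}=\max_{i,j}|M_{ij}|$; $\|G^{-1}\|_\infty$ is the induced $\ell_\infty$ operator norm. *)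

theory Defs
  imports "HOL-Analysis.Analysis"
begin

text \<open>States and actions are natural numbers drawn from finite nonempty carriers S, A.
  Vectors/matrices indexed by S x A are functions on nat x nat restricted to S x A.
  The chain zbar_t = (s_t,a_t,s_{t+1}) lives on X = S x A x S.\<close>

definition finite_mdp ::
  "nat set \<Rightarrow> nat set \<Rightarrow> (nat \<Rightarrow> nat \<Rightarrow> nat \<Rightarrow> real) \<Rightarrow> (nat \<Rightarrow> nat \<Rightarrow> real) \<Rightarrow> real
   \<Rightarrow> (nat \<Rightarrow> nat \<Rightarrow> real) \<Rightarrow> bool" where
  "finite_mdp S A P r \<gamma> pib \<longleftrightarrow>
     finite S \<and> finite A \<and> S \<noteq> {} \<and> A \<noteq> {} \<and> 0 < \<gamma> \<and> \<gamma> < 1 \<and>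
     (\<forall>s\<in>S. \<forall>a\<in>A. 0 \<le> r s a \<and> r s a \<le> 1) \<and>
     (\<forall>s\<in>S. \<forall>a\<in>A. (\<forall>s'\<in>S. 0 \<le> P s a s') \<and> (\<Sum>s'\<in>S. P s a s') = 1) \<and>
     (\<forall>s\<in>S. (\<forall>a\<in>A. 0 \<le> pib s a) \<and> (\<Sum>a\<in>A. pib s a) = 1)"

definition is_optimal_Q ::
  "nat set \<Rightarrow> nat set \<Rightarrow> (nat \<Rightarrow> nat \<Rightarrow> nat \<Rightarrow> real) \<Rightarrow> (nat \<Rightarrow> nat \<Rightarrow> real) \<Rightarrow> real
   \<Rightarrow> (nat \<Rightarrow> nat \<Rightarrow> real) \<Rightarrow> bool" where
  "is_optimal_Q S A P r \<gamma> Q \<longleftrightarrow>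
     (\<forall>s\<in>S. \<forall>a\<in>A. Q s a = r s a + \<gamma> * (\<Sum>s'\<in>S. P s a s' * Max ((\<lambda>a'. Q s' a') ` A)))"

definition Vstar :: "nat set \<Rightarrow> (nat \<Rightarrow> nat \<Rightarrow> real) \<Rightarrow> nat \<Rightarrow> real" where
  "Vstar A Q s = Max ((\<lambda>a. Q s a) ` A)"

text \<open>(A4): unique optimal deterministic policy with positive optimality gap.\<close>
definition unique_opt_policy :: "nat set \<Rightarrow> nat set \<Rightarrow> (nat \<Rightarrow> nat \<Rightarrow> real) \<Rightarrow> bool" where
  "unique_opt_policy S A Q \<longleftrightarrow>
     (\<forall>s\<in>S. \<exists>a\<in>A. \<forall>a'\<in>A. a' \<noteq> a \<longrightarrow> Q s a' < Q s a)"

definition pistar :: "nat set \<Rightarrow> (nat \<Rightarrow> nat \<Rightarrow> real) \<Rightarrow> nat \<Rightarrow> nat" where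
  "pistar A Q s = (THE a. a \<in> A \<and> (\<forall>a'\<in>A. a' \<noteq> a \<longrightarrow> Q s a' < Q s a))"

definition stationary_sa ::
  "nat set \<Rightarrow> nat set \<Rightarrow> (nat \<Rightarrow> nat \<Rightarrow> nat \<Rightarrow> real) \<Rightarrow> (nat \<Rightarrow> nat \<Rightarrow> real)
   \<Rightarrow> (nat \<times> nat \<Rightarrow> real) \<Rightarrow> bool" where
  "stationary_sa S A P pib \<mu> \<longleftrightarrow>
     (\<forall>i\<in>S \<times> A. 0 < \<mu> i) \<and> (\<Sum>i\<in>S \<times> A. \<mu> i) = 1 \<and>
     (\<forall>s'\<in>S. \<forall>a'\<in>A. \<mu> (s', a') = (\<Sum>(s, a)\<in>S \<times> A. \<mu> (s, a) * P s a s' * pib s' a'))"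

definition Xset :: "nat set \<Rightarrow> nat set \<Rightarrow> (nat \<times> nat \<times> nat) set" where
  "Xset S A = S \<times> A \<times> S"

definition Pbar ::
  "(nat \<Rightarrow> nat \<Rightarrow> nat \<Rightarrow> real) \<Rightarrow> (nat \<Rightarrow> nat \<Rightarrow> real)
   \<Rightarrow> nat \<times> nat \<times> nat \<Rightarrow> nat \<times> nat \<times> nat \<Rightarrow> real" where
  "Pbar P pib x y =
     (case x of (s1, a1, s1') \<Rightarrow> case y of (s2, a2, s2') \<Rightarrow>
        (if s2 = s1' then pib s2 a2 * P s2 a2 s2' else 0))"

fun kpow ::
  "(nat \<times> nat \<times> nat) set \<Rightarrow> (nat \<times> nat \<times> nat \<Rightarrow> nat \<times> nat \<times> nat \<Rightarrow> real)
   \<Rightarrow> nat \<Rightarrow> nat \<times> nat \<times> nat \<Rightarrow> nat \<times> nat \<times> nat \<Rightarrow> real" where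
  "kpow X K 0 x y = (if x = y then 1 else 0)"
| "kpow X K (Suc t) x y = (\<Sum>z\<in>X. kpow X K t x z * K z y)"

definition mubar :: "(nat \<Rightarrow> nat \<Rightarrow> nat \<Rightarrow> real) \<Rightarrow> (nat \<times> nat \<Rightarrow> real) \<Rightarrow> nat \<times> nat \<times> nat \<Rightarrow> real" where
  "mubar P \<mu> x = (case x of (s, a, s') \<Rightarrow> \<mu> (s, a) * P s a s')"

definition dtv :: "'x set \<Rightarrow> ('x \<Rightarrow> real) \<Rightarrow> ('x \<Rightarrow> real) \<Rightarrow> real" where
  "dtv X p q = (1/2) * (\<Sum>y\<in>X. \<bar>p y - q y\<bar>)"

text \<open>(A2): uniform geometric mixing with mixing time tmix (a positive integer).\<close>
definition mixing ::
  "nat set \<Rightarrow> nat set \<Rightarrow> (nat \<Rightarrow> nat \<Rightarrow> nat \<Rightarrow> real) \<Rightarrow> (nat \<Rightarrow> nat \<Rightarrow> real)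
   \<Rightarrow> (nat \<times> nat \<Rightarrow> real) \<Rightarrow> nat \<Rightarrow> bool" where
  "mixing S A P pib \<mu> tmix \<longleftrightarrow> 0 < tmix \<and>
     (\<forall>t. \<forall>x\<in>Xset S A.
        dtv (Xset S A) (kpow (Xset S A) (Pbar P pib) t x) (mubar P \<mu>)
          \<le> (1/4) ^ (t div tmix))"

definition eps ::
  "nat set \<Rightarrow> (nat \<Rightarrow> nat \<Rightarrow> real) \<Rightarrow> real \<Rightarrow> (nat \<Rightarrow> nat \<Rightarrow> real)
   \<Rightarrow> nat \<times> nat \<times> nat \<Rightarrow> nat \<times> nat \<Rightarrow> real" where
  "eps A r \<gamma> Q x j = (case x of (s, a, s') \<Rightarrow>
      (if j = (s, a) then r s a + \<gamma> * Vstar A Q s' - Q s a else 0))"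

definition gfun ::
  "nat set \<Rightarrow> nat set \<Rightarrow> (nat \<Rightarrow> nat \<Rightarrow> nat \<Rightarrow> real) \<Rightarrow> (nat \<Rightarrow> nat \<Rightarrow> real) \<Rightarrow> real
   \<Rightarrow> (nat \<Rightarrow> nat \<Rightarrow> real) \<Rightarrow> (nat \<Rightarrow> nat \<Rightarrow> real) \<Rightarrow> nat \<times> nat \<times> nat \<Rightarrow> nat \<times> nat \<Rightarrow> real" where
  "gfun S A P r \<gamma> pib Q x j =
     (\<Sum>k. \<Sum>y\<in>Xset S A. kpow (Xset S A) (Pbar P pib) k x y * eps A r \<gamma> Q y j)"

definition Pg ::
  "nat set \<Rightarrow> nat set \<Rightarrow> (nat \<Rightarrow> nat \<Rightarrow> nat \<Rightarrow> real) \<Rightarrow> (nat \<Rightarrow> nat \<Rightarrow> real) \<Rightarrow> real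
   \<Rightarrow> (nat \<Rightarrow> nat \<Rightarrow> real) \<Rightarrow> (nat \<Rightarrow> nat \<Rightarrow> real) \<Rightarrow> nat \<times> nat \<times> nat \<Rightarrow> nat \<times> nat \<Rightarrow> real" where
  "Pg S A P r \<gamma> pib Q x j =
     (\<Sum>y\<in>Xset S A. Pbar P pib x y * gfun S A P r \<gamma> pib Q y j)"

definition Ppistar ::
  "nat set \<Rightarrow> (nat \<Rightarrow> nat \<Rightarrow> nat \<Rightarrow> real) \<Rightarrow> (nat \<Rightarrow> nat \<Rightarrow> real)
   \<Rightarrow> nat \<times> nat \<Rightarrow> nat \<times> nat \<Rightarrow> real" where
  "Ppistar A P Q i j = (case i of (s, a) \<Rightarrow> case j of (s', a') \<Rightarrow>
      P s a s' * (if a' = pistar A Q s' then 1 else 0))"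

definition Gmat ::
  "nat set \<Rightarrow> (nat \<Rightarrow> nat \<Rightarrow> nat \<Rightarrow> real) \<Rightarrow> real \<Rightarrow> (nat \<Rightarrow> nat \<Rightarrow> real)
   \<Rightarrow> (nat \<times> nat \<Rightarrow> real) \<Rightarrow> nat \<times> nat \<Rightarrow> nat \<times> nat \<Rightarrow> real" where
  "Gmat A P \<gamma> Q \<mu> i j = \<mu> i * ((if i = j then 1 else 0) - \<gamma> * Ppistar A P Q i j)"

definition minv :: "'i set \<Rightarrow> ('i \<Rightarrow> 'i \<Rightarrow> real) \<Rightarrow> 'i \<Rightarrow> 'i \<Rightarrow> real" where
  "minv I M = (SOME N.
      (\<forall>i\<in>I. \<forall>j\<in>I. (\<Sum>k\<in>I. M i k * N k j) = (if i = j then 1 else 0)) \<and>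
      (\<forall>i\<in>I. \<forall>j\<in>I. (\<Sum>k\<in>I. N i k * M k j) = (if i = j then 1 else 0)))"

definition congr :: "'i set \<Rightarrow> ('i \<Rightarrow> 'i \<Rightarrow> real) \<Rightarrow> ('i \<Rightarrow> 'i \<Rightarrow> real) \<Rightarrow> 'i \<Rightarrow> 'i \<Rightarrow> real" where
  "congr I B M i j = (\<Sum>p\<in>I. \<Sum>q\<in>I. B i p * M p q * B j q)"

definition chnorm :: "'i set \<Rightarrow> ('i \<Rightarrow> 'i \<Rightarrow> real) \<Rightarrow> real" where
  "chnorm I M = Max ((\<lambda>(i, j). \<bar>M i j\<bar>) ` (I \<times> I))"

definition linf_opnorm :: "'i set \<Rightarrow> ('i \<Rightarrow> 'i \<Rightarrow> real) \<Rightarrow> real" where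
  "linf_opnorm I M =
     Sup ((\<lambda>v. Max ((\<lambda>i. \<bar>\<Sum>j\<in>I. M i j * v j\<bar>) ` I)) ` {v. \<forall>i\<in>I. \<bar>v i\<bar> \<le> 1})"

definition Sigma_eps ::
  "nat set \<Rightarrow> nat set \<Rightarrow> (nat \<Rightarrow> nat \<Rightarrow> nat \<Rightarrow> real) \<Rightarrow> (nat \<Rightarrow> nat \<Rightarrow> real) \<Rightarrow> real
   \<Rightarrow> (nat \<Rightarrow> nat \<Rightarrow> real) \<Rightarrow> (nat \<Rightarrow> nat \<Rightarrow> real) \<Rightarrow> (nat \<times> nat \<Rightarrow> real)
   \<Rightarrow> nat \<times> nat \<Rightarrow> nat \<times> nat \<Rightarrow> real" where
  "Sigma_eps S A P r \<gamma> pib Q \<mu> i j =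
     (\<Sum>x\<in>Xset S A. mubar P \<mu> x * eps A r \<gamma> Q x i * eps A r \<gamma> Q x j)
     + (\<Sum>l. \<Sum>x\<in>Xset S A. \<Sum>y\<in>Xset S A.
          mubar P \<mu> x * kpow (Xset S A) (Pbar P pib) (Suc l) x y *
          (eps A r \<gamma> Q x i * eps A r \<gamma> Q y j + eps A r \<gamma> Q y i * eps A r \<gamma> Q x j))"

definition Sigma_inf ::
  "nat set \<Rightarrow> nat set \<Rightarrow> (nat \<Rightarrow> nat \<Rightarrow> nat \<Rightarrow> real) \<Rightarrow> (nat \<Rightarrow> nat \<Rightarrow> real) \<Rightarrow> real
   \<Rightarrow> (nat \<Rightarrow> nat \<Rightarrow> real) \<Rightarrow> (nat \<Rightarrow> nat \<Rightarrow> real) \<Rightarrow> (nat \<times> nat \<Rightarrow> real)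
   \<Rightarrow> nat \<times> nat \<Rightarrow> nat \<times> nat \<Rightarrow> real" where
  "Sigma_inf S A P r \<gamma> pib Q \<mu> =
     congr (S \<times> A) (minv (S \<times> A) (Gmat A P \<gamma> Q \<mu>)) (Sigma_eps S A P r \<gamma> pib Q \<mu>)"

definition is_distr :: "'x set \<Rightarrow> ('x \<Rightarrow> real) \<Rightarrow> bool" where
  "is_distr X \<nu> \<longleftrightarrow> (\<forall>x\<in>X. 0 \<le> \<nu> x) \<and> (\<Sum>x\<in>X. \<nu> x) = 1"

definition law ::
  "nat set \<Rightarrow> nat set \<Rightarrow> (nat \<Rightarrow> nat \<Rightarrow> nat \<Rightarrow> real) \<Rightarrow> (nat \<Rightarrow> nat \<Rightarrow> real)
   \<Rightarrow> (nat \<times> nat \<times> nat \<Rightarrow> real) \<Rightarrow> nat \<Rightarrow> nat \<times> nat \<times> nat \<Rightarrow> real" where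
  "law S A P pib \<nu> k y = (\<Sum>x\<in>Xset S A. \<nu> x * kpow (Xset S A) (Pbar P pib) k x y)"

definition Ek ::
  "nat set \<Rightarrow> nat set \<Rightarrow> (nat \<Rightarrow> nat \<Rightarrow> nat \<Rightarrow> real) \<Rightarrow> (nat \<Rightarrow> nat \<Rightarrow> real) \<Rightarrow> real
   \<Rightarrow> (nat \<Rightarrow> nat \<Rightarrow> real) \<Rightarrow> (nat \<Rightarrow> nat \<Rightarrow> real) \<Rightarrow> (nat \<times> nat \<times> nat \<Rightarrow> real) \<Rightarrow> nat
   \<Rightarrow> nat \<times> nat \<Rightarrow> nat \<times> nat \<Rightarrow> real" where
  "Ek S A P r \<gamma> pib Q \<nu> k i j =
     (\<Sum>x\<in>Xset S A. \<Sum>y\<in>Xset S A.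
        law S A P pib \<nu> (k - 1) x * Pbar P pib x y *
        (gfun S A P r \<gamma> pib Q y i - Pg S A P r \<gamma> pib Q x i) *
        (gfun S A P r \<gamma> pib Q y j - Pg S A P r \<gamma> pib Q x j))"

definition Sigma_n ::
  "nat set \<Rightarrow> nat set \<Rightarrow> (nat \<Rightarrow> nat \<Rightarrow> nat \<Rightarrow> real) \<Rightarrow> (nat \<Rightarrow> nat \<Rightarrow> real) \<Rightarrow> real
   \<Rightarrow> (nat \<Rightarrow> nat \<Rightarrow> real) \<Rightarrow> (nat \<Rightarrow> nat \<Rightarrow> real) \<Rightarrow> (nat \<times> nat \<Rightarrow> real)
   \<Rightarrow> (nat \<times> nat \<times> nat \<Rightarrow> real) \<Rightarrow> nat \<Rightarrow> nat \<times> nat \<Rightarrow> nat \<times> nat \<Rightarrow> real" where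
  "Sigma_n S A P r \<gamma> pib Q \<mu> \<nu> n i j =
     (1 / real n) * (\<Sum>k=1..n.
        congr (S \<times> A) (minv (S \<times> A) (Gmat A P \<gamma> Q \<mu>)) (Ek S A P r \<gamma> pib Q \<nu> k) i j)"

end

theory Submission
  imports Defs
begin

lemma blocksum: "0 < (\<tau>::nat) \<Longrightarrow> (\<Sum>k<\<tau>*N. (1/4::real)^(k div \<tau>)) = real \<tau> * (\<Sum>j<N. (1/4::real)^j)"
proof (induction N)
  case 0 then show ?case by simp
next
  case (Suc N)
  have e: "{..<\<tau>*Suc N} = {..<\<tau>*N} \<union> {\<tau>*N..<\<tau>*N+\<tau>}" by auto
  have "(\<Sum>k\<in>{\<tau>*N..<\<tau>*N+\<tau>}. (1/4::real)^(k div \<tau>)) = real \<tau> * (1/4)^N"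
  proof -
    have "(\<Sum>k\<in>{\<tau>*N..<\<tau>*N+\<tau>}. (1/4::real)^(k div \<tau>)) = (\<Sum>k\<in>{\<tau>*N..<\<tau>*N+\<tau>}. (1/4::real)^N)"
    proof (rule sum.cong)
      fix k assume "k \<in> {\<tau>*N..<\<tau>*N+\<tau>}"
      then obtain r where "k = \<tau>*N + r" "r < \<tau>" by (metis add_less_cancel_left atLeastLessThan_iff le_Suc_ex)
      then have "k div \<tau> = N" using Suc.prems by simp
      then show "(1/4::real)^(k div \<tau>) = (1/4)^N" by simp
    qed simp
    then show ?thesis by simp
  qed
  note * = this
  have "(\<Sum>k<\<tau>*Suc N. (1/4::real)^(k div \<tau>)) = (\<Sum>k\<in>{..<\<tau>*N} \<union> {\<tau>*N..<\<tau>*N+\<tau>}. (1/4::real)^(k div \<tau>))"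
    by (simp only: e)
  also have "\<dots> = (\<Sum>k<\<tau>*N. (1/4::real)^(k div \<tau>)) + real \<tau> * (1/4)^N"
    by (subst sum.union_disjoint) (auto simp: *)
  finally have "(\<Sum>k<\<tau>*Suc N. (1/4::real)^(k div \<tau>)) = (\<Sum>k<\<tau>*N. (1/4::real)^(k div \<tau>)) + real \<tau> * (1/4)^N" .
  then show ?case using Suc by (simp add: algebra_simps)
qed

lemma geo_partial: assumes "0 < (\<tau>::nat)" shows "(\<Sum>k<N. (1/4::real)^(k div \<tau>)) \<le> 2 * real \<tau>"
proof -
  have "(\<Sum>k<N. (1/4::real)^(k div \<tau>)) \<le> (\<Sum>k<\<tau>*N. (1/4::real)^(k div \<tau>))"
    using assms by (intro sum_mono2) auto
  also have "\<dots> = real \<tau> * (\<Sum>j<N. (1/4::real)^j)" using blocksum assms by blast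
  also have "\<dots> \<le> real \<tau> * 2"
  proof -
    have "(\<Sum>j<N. (1/4::real)^j) < 1/(1-1/4)" by (rule geometric_sum_less) auto
    then show ?thesis by (intro mult_left_mono) auto
  qed
  finally show ?thesis by simp
qed

lemma geo_summable: "0 < (\<tau>::nat) \<Longrightarrow> summable (\<lambda>k. (1/4::real)^(k div \<tau>))"
  by (rule summableI_nonneg_bounded[where x="2*real \<tau>"]) (auto intro: geo_partial)

lemma geo_suminf: "0 < (\<tau>::nat) \<Longrightarrow> (\<Sum>k. (1/4::real)^(k div \<tau>)) \<le> 2 * real \<tau>"
  by (rule suminf_le_const) (auto intro: geo_summable geo_partial)

lemma ifmul1: "(if P then 1 else 0) * (a::real) = (if P then a else 0)" by simp
lemma ifmul2: "(a::real) * (if P then 1 else 0) = (if P then a else 0)" by simp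

locale mc =
  fixes X :: "(nat\<times>nat\<times>nat) set" and K :: "nat\<times>nat\<times>nat \<Rightarrow> nat\<times>nat\<times>nat \<Rightarrow> real"
    and m :: "nat\<times>nat\<times>nat \<Rightarrow> real" and \<tau> :: nat
  assumes finX: "finite X"
  and Knn: "\<And>x y. x\<in>X \<Longrightarrow> y\<in>X \<Longrightarrow> 0 \<le> K x y"
  and Ksum: "\<And>x. x\<in>X \<Longrightarrow> (\<Sum>y\<in>X. K x y) = 1"
  and stat: "\<And>y. y\<in>X \<Longrightarrow> (\<Sum>x\<in>X. m x * K x y) = m y"
  and mix: "\<And>t x. x\<in>X \<Longrightarrow> (\<Sum>y\<in>X. \<bar>kpow X K t x y - m y\<bar>) \<le> 2 * (1/4)^(t div \<tau>)"
  and taupos: "0 < \<tau>"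
begin

lemma kpow_Suc':
  assumes "x \<in> X" shows "w \<in> X \<Longrightarrow> kpow X K (Suc t) x w = (\<Sum>y\<in>X. K x y * kpow X K t y w)"
proof (induction t arbitrary: w)
  case 0
  have "(\<Sum>z\<in>X. (if x = z then 1 else 0) * K z w) = K x w"
    using 0 assms finX by (simp add: ifmul1 ifmul2 sum.delta sum.delta')
  moreover have "(\<Sum>y\<in>X. K x y * (if y = w then 1 else 0)) = K x w"
    using 0 assms finX by (simp add: ifmul1 ifmul2 sum.delta sum.delta')
  ultimately show ?case by simp
next
  case (Suc t)
  have "kpow X K (Suc (Suc t)) x w = (\<Sum>z\<in>X. kpow X K (Suc t) x z * K z w)" by simp
  also have "\<dots> = (\<Sum>z\<in>X. (\<Sum>y\<in>X. K x y * kpow X K t y z) * K z w)"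
    by (intro sum.cong refl) (simp add: Suc.IH del: kpow.simps)
  also have "\<dots> = (\<Sum>y\<in>X. K x y * (\<Sum>z\<in>X. kpow X K t y z * K z w))"
    by (simp only: sum_distrib_left sum_distrib_right mult.assoc) (rule sum.swap)
  also have "\<dots> = (\<Sum>y\<in>X. K x y * kpow X K (Suc t) y w)" by simp
  finally show ?case .
qed

lemma term_bound:
  assumes fb: "\<forall>y\<in>X. \<bar>f y\<bar> \<le> M" and f0: "(\<Sum>y\<in>X. m y * f y) = 0" and x: "x \<in> X"
  shows "\<bar>\<Sum>y\<in>X. kpow X K k x y * f y\<bar> \<le> 2 * M * (1/4)^(k div \<tau>)"
proof -
  have "(\<Sum>y\<in>X. kpow X K k x y * f y) = (\<Sum>y\<in>X. (kpow X K k x y - m y) * f y)"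
    using f0 by (simp add: left_diff_distrib sum_subtractf)
  also have "\<bar>\<dots>\<bar> \<le> (\<Sum>y\<in>X. \<bar>kpow X K k x y - m y\<bar> * M)"
    by (rule order_trans[OF sum_abs]) (auto simp: abs_mult fb intro!: sum_mono mult_left_mono)
  also have "\<dots> = M * (\<Sum>y\<in>X. \<bar>kpow X K k x y - m y\<bar>)" by (simp add: sum_distrib_left mult.commute)
  also have "\<dots> \<le> M * (2 * (1/4)^(k div \<tau>))"
    using fb x by (intro mult_left_mono mix) force+
  finally show ?thesis by simp
qed

definition gf :: "(nat\<times>nat\<times>nat \<Rightarrow> real) \<Rightarrow> nat\<times>nat\<times>nat \<Rightarrow> real" where
  "gf f x = (\<Sum>k. \<Sum>y\<in>X. kpow X K k x y * f y)"

definition Pgf :: "(nat\<times>nat\<times>nat \<Rightarrow> real) \<Rightarrow> nat\<times>nat\<times>nat \<Rightarrow> real" where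
  "Pgf f x = (\<Sum>y\<in>X. K x y * gf f y)"

lemma summ:
  assumes fb: "\<forall>y\<in>X. \<bar>f y\<bar> \<le> M" and f0: "(\<Sum>y\<in>X. m y * f y) = 0" and x: "x \<in> X"
  shows "summable (\<lambda>k. \<Sum>y\<in>X. kpow X K k x y * f y)"
proof (rule summable_comparison_test')
  show "summable (\<lambda>k. 2 * M * (1/4::real)^(k div \<tau>))"
    using geo_summable[OF taupos] by (rule summable_mult)
  show "norm (\<Sum>y\<in>X. kpow X K k x y * f y) \<le> 2 * M * (1/4)^(k div \<tau>)" for k
    using term_bound[OF assms] by simp
qed

lemma gf_bound:
  assumes fb: "\<forall>y\<in>X. \<bar>f y\<bar> \<le> M" and f0: "(\<Sum>y\<in>X. m y * f y) = 0" and x: "x \<in> X"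
  shows "\<bar>gf f x\<bar> \<le> 4 * M * \<tau>"
proof -
  have M: "0 \<le> M" using fb x by force
  have s2: "summable (\<lambda>k. 2 * M * (1/4::real)^(k div \<tau>))"
    using geo_summable[OF taupos] by (rule summable_mult)
  have s1: "summable (\<lambda>k. \<Sum>y\<in>X. kpow X K k x y * f y)" by (rule summ[OF assms])
  have "(\<Sum>k. 2 * M * (1/4::real)^(k div \<tau>)) = 2 * M * (\<Sum>k. (1/4::real)^(k div \<tau>))"
    using geo_summable[OF taupos] by (rule suminf_mult)
  also have "\<dots> \<le> 2 * M * (2 * real \<tau>)" using geo_suminf[OF taupos] M by (intro mult_left_mono) auto
  finally have B: "(\<Sum>k. 2 * M * (1/4::real)^(k div \<tau>)) \<le> 4 * M * \<tau>" by simp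
  have "gf f x \<le> (\<Sum>k. 2 * M * (1/4::real)^(k div \<tau>))"
    unfolding gf_def using term_bound[OF assms] by (intro suminf_le s1 s2) (auto simp: abs_le_iff)
  moreover have "- gf f x \<le> (\<Sum>k. 2 * M * (1/4::real)^(k div \<tau>))"
    unfolding gf_def using term_bound[OF assms] s1 s2
    by (subst suminf_minus[symmetric]) (auto simp: abs_le_iff intro!: suminf_le summable_minus)
  ultimately show ?thesis using B by linarith
qed

lemma Pg_eq:
  assumes fb: "\<forall>y\<in>X. \<bar>f y\<bar> \<le> M" and f0: "(\<Sum>y\<in>X. m y * f y) = 0" and x: "x \<in> X"
  shows "Pgf f x = gf f x - f x"
proof -
  define a where "a k y = (\<Sum>w\<in>X. kpow X K k y w * f w)" for k y
  have sa: "y \<in> X \<Longrightarrow> summable (\<lambda>k. a k y)" for y unfolding a_def using summ[OF fb f0] by blast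
  have "Pgf f x = (\<Sum>y\<in>X. K x y * (\<Sum>k. a k y))" unfolding Pgf_def gf_def a_def by simp
  also have "\<dots> = (\<Sum>y\<in>X. (\<Sum>k. K x y * a k y))"
    by (intro sum.cong refl) (simp add: suminf_mult sa)
  also have "\<dots> = (\<Sum>k. \<Sum>y\<in>X. K x y * a k y)"
    by (rule suminf_sum[symmetric]) (simp add: summable_mult sa)
  also have "\<dots> = (\<Sum>k. a (Suc k) x)"
  proof (rule suminf_cong)
    fix k
    have "(\<Sum>y\<in>X. K x y * a k y) = (\<Sum>w\<in>X. (\<Sum>y\<in>X. K x y * kpow X K k y w) * f w)"
      unfolding a_def by (simp only: sum_distrib_left sum_distrib_right mult.assoc) (rule sum.swap)
    also have "\<dots> = a (Suc k) x" unfolding a_def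
      by (intro sum.cong refl) (simp only: kpow_Suc'[OF x])
    finally show "(\<Sum>y\<in>X. K x y * a k y) = a (Suc k) x" .
  qed
  also have "\<dots> = (\<Sum>k. a k x) - a 0 x" by (rule suminf_split_head[OF sa[OF x]])
  also have "a 0 x = f x" unfolding a_def using x finX by (simp add: ifmul1 ifmul2 sum.delta sum.delta')
  finally show ?thesis unfolding gf_def a_def by simp
qed

lemma Pg_bound:
  assumes fb: "\<forall>y\<in>X. \<bar>f y\<bar> \<le> M" and f0: "(\<Sum>y\<in>X. m y * f y) = 0" and x: "x \<in> X"
  shows "\<bar>Pgf f x\<bar> \<le> 4 * M * \<tau>"
proof -
  have "\<bar>Pgf f x\<bar> \<le> (\<Sum>y\<in>X. K x y * (4 * M * \<tau>))" unfolding Pgf_def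
    by (rule order_trans[OF sum_abs]) (auto simp: abs_mult Knn x gf_bound[OF fb f0] intro!: sum_mono mult_left_mono)
  also have "\<dots> = 4 * M * \<tau>" using Ksum[OF x] by (simp add: sum_distrib_right[symmetric])
  finally show ?thesis .
qed

end

context mc begin

definition FF :: "(nat\<times>nat\<times>nat \<Rightarrow> real) \<Rightarrow> (nat\<times>nat\<times>nat \<Rightarrow> real) \<Rightarrow> nat\<times>nat\<times>nat \<Rightarrow> real" where
  "FF f h x = (\<Sum>y\<in>X. K x y * (gf f y - Pgf f x) * (gf h y - Pgf h x))"

lemma FF_expand:
  assumes x: "x \<in> X"
  shows "FF f h x = (\<Sum>y\<in>X. K x y * (gf f y * gf h y)) - Pgf f x * Pgf h x"
proof -
  define p where "p = Pgf f x"
  define q where "q = Pgf h x"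
  have "FF f h x = (\<Sum>y\<in>X. K x y*(gf f y*gf h y) - q*(K x y*gf f y) - p*(K x y*gf h y) + p*q*K x y)"
    unfolding FF_def p_def[symmetric] q_def[symmetric] by (intro sum.cong) (auto simp: algebra_simps)
  also have "\<dots> = (\<Sum>y\<in>X. K x y*(gf f y*gf h y)) - q*(\<Sum>y\<in>X. K x y*gf f y) - p*(\<Sum>y\<in>X. K x y*gf h y) + p*q*(\<Sum>y\<in>X. K x y)"
    by (simp add: sum.distrib sum_subtractf sum_distrib_left)
  also have "\<dots> = (\<Sum>y\<in>X. K x y*(gf f y*gf h y)) - p * q"
    using Ksum[OF x] unfolding p_def q_def Pgf_def by simp
  finally show ?thesis unfolding p_def q_def .
qed

lemma stat1: "(\<Sum>x\<in>X. m x * (\<Sum>y\<in>X. K x y * u y)) = (\<Sum>y\<in>X. m y * u y)"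
proof -
  have "(\<Sum>x\<in>X. m x * (\<Sum>y\<in>X. K x y * u y)) = (\<Sum>x\<in>X. \<Sum>y\<in>X. m x * K x y * u y)"
    by (simp add: sum_distrib_left mult.assoc)
  also have "\<dots> = (\<Sum>y\<in>X. \<Sum>x\<in>X. m x * K x y * u y)" by (rule sum.swap)
  also have "\<dots> = (\<Sum>y\<in>X. m y * u y)"
    by (intro sum.cong refl) (simp add: sum_distrib_right[symmetric] stat)
  finally show ?thesis .
qed

lemma ser_summ:
  assumes hb: "\<forall>y\<in>X. \<bar>h y\<bar> \<le> M" and h0: "(\<Sum>y\<in>X. m y * h y) = 0"
  shows "summable (\<lambda>l. \<Sum>x\<in>X. \<Sum>y\<in>X. m x * kpow X K (Suc l) x y * (u x * h y))"
proof -
  have e: "(\<Sum>x\<in>X. \<Sum>y\<in>X. m x * kpow X K (Suc l) x y * (u x * h y))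
      = (\<Sum>x\<in>X. (m x * u x) * (\<Sum>y\<in>X. kpow X K (Suc l) x y * h y))" for l
    by (simp add: sum_distrib_left algebra_simps)
  have s: "x \<in> X \<Longrightarrow> summable (\<lambda>l. \<Sum>y\<in>X. kpow X K (Suc l) x y * h y)" for x
    using summ[OF hb h0, of x] by (simp only: summable_Suc_iff[where f="\<lambda>k. \<Sum>y\<in>X. kpow X K k x y * h y"])
  show ?thesis unfolding e
    by (intro summable_sum summable_mult s)
qed

lemma ser:
  assumes hb: "\<forall>y\<in>X. \<bar>h y\<bar> \<le> M" and h0: "(\<Sum>y\<in>X. m y * h y) = 0"
  shows "(\<Sum>x\<in>X. m x * u x * gf h x) = (\<Sum>x\<in>X. m x * u x * h x)
           + (\<Sum>l. \<Sum>x\<in>X. \<Sum>y\<in>X. m x * kpow X K (Suc l) x y * (u x * h y))"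
proof -
  define b where "b k = (\<Sum>x\<in>X. (m x * u x) * (\<Sum>y\<in>X. kpow X K k x y * h y))" for k
  have sa: "x \<in> X \<Longrightarrow> summable (\<lambda>k. \<Sum>y\<in>X. kpow X K k x y * h y)" for x using summ[OF hb h0] by blast
  have sb: "summable b" unfolding b_def by (intro summable_sum summable_mult sa)
  have "(\<Sum>x\<in>X. m x * u x * gf h x) = (\<Sum>x\<in>X. \<Sum>k. (m x * u x) * (\<Sum>y\<in>X. kpow X K k x y * h y))"
    unfolding gf_def by (intro sum.cong refl) (simp add: suminf_mult sa)
  also have "\<dots> = suminf b" unfolding b_def
    by (rule suminf_sum[symmetric]) (simp add: summable_mult sa)
  also have "\<dots> = b 0 + (\<Sum>l. b (Suc l))" using suminf_split_head[OF sb] by simp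
  also have "b 0 = (\<Sum>x\<in>X. m x * u x * h x)" unfolding b_def using finX
    by (intro sum.cong refl) (simp add: ifmul1 ifmul2 sum.delta sum.delta')
  also have "(\<Sum>l. b (Suc l)) = (\<Sum>l. \<Sum>x\<in>X. \<Sum>y\<in>X. m x * kpow X K (Suc l) x y * (u x * h y))"
    unfolding b_def by (intro suminf_cong) (simp add: sum_distrib_left algebra_simps)
  finally show ?thesis .
qed

lemma stat_id:
  assumes fb: "\<forall>y\<in>X. \<bar>f y\<bar> \<le> M" and f0: "(\<Sum>y\<in>X. m y * f y) = 0"
    and hb: "\<forall>y\<in>X. \<bar>h y\<bar> \<le> M" and h0: "(\<Sum>y\<in>X. m y * h y) = 0"
  shows "(\<Sum>x\<in>X. m x * FF f h x) = (\<Sum>x\<in>X. m x * f x * h x)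
     + (\<Sum>l. \<Sum>x\<in>X. \<Sum>y\<in>X. m x * kpow X K (Suc l) x y * (f x * h y + f y * h x))"
proof -
  have "(\<Sum>x\<in>X. m x * FF f h x) = (\<Sum>x\<in>X. m x * (\<Sum>y\<in>X. K x y * (gf f y * gf h y))) - (\<Sum>x\<in>X. m x * (Pgf f x * Pgf h x))"
    by (simp add: FF_expand right_diff_distrib sum_subtractf cong: sum.cong)
  also have "\<dots> = (\<Sum>x\<in>X. m x * (gf f x * gf h x)) - (\<Sum>x\<in>X. m x * ((gf f x - f x) * (gf h x - h x)))"
    by (simp add: stat1 Pg_eq[OF fb f0] Pg_eq[OF hb h0] cong: sum.cong)
  also have "\<dots> = (\<Sum>x\<in>X. m x * (gf f x * gf h x) - m x * ((gf f x - f x) * (gf h x - h x)))"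
    by (simp add: sum_subtractf)
  also have "\<dots> = (\<Sum>x\<in>X. m x * f x * gf h x + m x * h x * gf f x - m x * f x * h x)"
    by (intro sum.cong refl) (simp add: algebra_simps)
  also have "\<dots> = (\<Sum>x\<in>X. m x * f x * gf h x) + (\<Sum>x\<in>X. m x * h x * gf f x) - (\<Sum>x\<in>X. m x * f x * h x)"
    by (simp add: sum.distrib sum_subtractf)
  also have "\<dots> = (\<Sum>x\<in>X. m x * f x * h x) + (\<Sum>l. \<Sum>x\<in>X. \<Sum>y\<in>X. m x * kpow X K (Suc l) x y * (f x * h y))
      + (\<Sum>l. \<Sum>x\<in>X. \<Sum>y\<in>X. m x * kpow X K (Suc l) x y * (h x * f y))"
    unfolding ser[OF hb h0, of f] ser[OF fb f0, of h] by (simp add: algebra_simps)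
  finally have A: "(\<Sum>x\<in>X. m x * FF f h x) = (\<Sum>x\<in>X. m x * f x * h x) + ((\<Sum>l. \<Sum>x\<in>X. \<Sum>y\<in>X. m x * kpow X K (Suc l) x y * (f x * h y))
      + (\<Sum>l. \<Sum>x\<in>X. \<Sum>y\<in>X. m x * kpow X K (Suc l) x y * (h x * f y)))" by (simp only: add.assoc)
  have "(\<Sum>l. \<Sum>x\<in>X. \<Sum>y\<in>X. m x * kpow X K (Suc l) x y * (f x * h y))
      + (\<Sum>l. \<Sum>x\<in>X. \<Sum>y\<in>X. m x * kpow X K (Suc l) x y * (h x * f y))
      = (\<Sum>l. \<Sum>x\<in>X. \<Sum>y\<in>X. m x * kpow X K (Suc l) x y * (f x * h y + f y * h x))"
    by (subst suminf_add[OF ser_summ[OF hb h0] ser_summ[OF fb f0]])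
       (simp add: sum.distrib[symmetric] algebra_simps)
  then show ?thesis using A by simp
qed

lemma FF_bound:
  assumes fb: "\<forall>y\<in>X. \<bar>f y\<bar> \<le> M" and f0: "(\<Sum>y\<in>X. m y * f y) = 0"
    and hb: "\<forall>y\<in>X. \<bar>h y\<bar> \<le> M" and h0: "(\<Sum>y\<in>X. m y * h y) = 0" and x: "x \<in> X"
  shows "\<bar>FF f h x\<bar> \<le> (8 * M * \<tau>)\<^sup>2"
proof -
  have M: "0 \<le> M" using fb x by force
  have b1: "\<bar>gf f y - Pgf f x\<bar> \<le> 8 * M * \<tau>" if "y \<in> X" for y
    using gf_bound[OF fb f0 that] Pg_bound[OF fb f0 x] by linarith
  have b2: "\<bar>gf h y - Pgf h x\<bar> \<le> 8 * M * \<tau>" if "y \<in> X" for y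
    using gf_bound[OF hb h0 that] Pg_bound[OF hb h0 x] by linarith
  have t: "\<bar>K x y * (gf f y - Pgf f x) * (gf h y - Pgf h x)\<bar> \<le> K x y * ((8 * M * \<tau>) * (8 * M * \<tau>))"
    if y: "y \<in> X" for y
  proof -
    have "\<bar>gf f y - Pgf f x\<bar> * \<bar>gf h y - Pgf h x\<bar> \<le> (8 * M * \<tau>) * (8 * M * \<tau>)"
      by (rule mult_mono[OF b1[OF y] b2[OF y]]) (use M in auto)
    then show ?thesis using Knn[OF x y] by (simp add: abs_mult mult.assoc mult_left_mono)
  qed
  have "\<bar>FF f h x\<bar> \<le> (\<Sum>y\<in>X. K x y * ((8 * M * \<tau>) * (8 * M * \<tau>)))" unfolding FF_def
    by (rule order_trans[OF sum_abs]) (rule sum_mono[OF t])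
  also have "\<dots> = (8 * M * \<tau>)\<^sup>2" using Ksum[OF x] by (simp add: sum_distrib_right[symmetric] power2_eq_square)
  finally show ?thesis .
qed

lemma law_diff:
  assumes nn: "\<forall>x\<in>X. 0 \<le> \<nu> x" and s1: "(\<Sum>x\<in>X. \<nu> x) = 1"
  shows "(\<Sum>y\<in>X. \<bar>(\<Sum>x\<in>X. \<nu> x * kpow X K k x y) - m y\<bar>) \<le> 2 * (1/4)^(k div \<tau>)"
proof -
  have "(\<Sum>y\<in>X. \<bar>(\<Sum>x\<in>X. \<nu> x * kpow X K k x y) - m y\<bar>) = (\<Sum>y\<in>X. \<bar>\<Sum>x\<in>X. \<nu> x * (kpow X K k x y - m y)\<bar>)"
    by (intro sum.cong refl) (simp add: right_diff_distrib sum_subtractf sum_distrib_right[symmetric] s1)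
  also have "\<dots> \<le> (\<Sum>y\<in>X. \<Sum>x\<in>X. \<nu> x * \<bar>kpow X K k x y - m y\<bar>)"
    by (intro sum_mono order_trans[OF sum_abs]) (simp add: abs_mult nn)
  also have "\<dots> = (\<Sum>x\<in>X. \<nu> x * (\<Sum>y\<in>X. \<bar>kpow X K k x y - m y\<bar>))"
    by (subst sum.swap) (simp add: sum_distrib_left)
  also have "\<dots> \<le> (\<Sum>x\<in>X. \<nu> x * (2 * (1/4)^(k div \<tau>)))"
    by (intro sum_mono mult_left_mono mix) (auto simp: nn)
  also have "\<dots> = 2 * (1/4)^(k div \<tau>)" by (simp add: sum_distrib_right[symmetric] s1)
  finally show ?thesis .
qed

end

lemma E_diff:
  assumes "\<forall>x\<in>X. \<bar>F x\<bar> \<le> (B::real)"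
  shows "\<bar>(\<Sum>x\<in>X. l x * F x) - (\<Sum>x\<in>X. m x * F x)\<bar> \<le> (\<Sum>x\<in>X. \<bar>l x - m x\<bar>) * B"
proof -
  have "\<bar>(\<Sum>x\<in>X. l x * F x) - (\<Sum>x\<in>X. m x * F x)\<bar> = \<bar>\<Sum>x\<in>X. (l x - m x) * F x\<bar>"
    by (simp add: sum_subtractf left_diff_distrib)
  also have "\<dots> \<le> (\<Sum>x\<in>X. \<bar>l x - m x\<bar> * B)"
    by (rule order_trans[OF sum_abs]) (auto simp: abs_mult assms intro!: sum_mono mult_left_mono)
  finally show ?thesis by (simp add: sum_distrib_right)
qed

lemma opnorm_row:
  fixes B :: "'i \<Rightarrow> 'i \<Rightarrow> real"
  assumes fin: "finite I" and i: "i \<in> I"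
  shows "(\<Sum>j\<in>I. \<bar>B i j\<bar>) \<le> linf_opnorm I B"
proof -
  define Sv where "Sv = (\<lambda>v. Max ((\<lambda>i. \<bar>\<Sum>j\<in>I. B i j * v j\<bar>) ` I)) ` {v. \<forall>i\<in>I. \<bar>v i\<bar> \<le> 1}"
  have ne: "I \<noteq> {}" using i by auto
  have bdd: "bdd_above Sv"
  proof (rule bdd_aboveI)
    fix t assume "t \<in> Sv"
    then obtain v where v: "\<forall>i\<in>I. \<bar>v i\<bar> \<le> 1" and t: "t = Max ((\<lambda>i. \<bar>\<Sum>j\<in>I. B i j * v j\<bar>) ` I)"
      unfolding Sv_def by auto
    have "\<bar>\<Sum>j\<in>I. B i' j * v j\<bar> \<le> (\<Sum>i\<in>I. \<Sum>j\<in>I. \<bar>B i j\<bar>)" if i': "i' \<in> I" for i'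
    proof -
      have "\<bar>\<Sum>j\<in>I. B i' j * v j\<bar> \<le> (\<Sum>j\<in>I. \<bar>B i' j\<bar>)"
      proof (rule order_trans[OF sum_abs], rule sum_mono)
        fix j assume "j \<in> I"
        then have "\<bar>v j\<bar> \<le> 1" using v by auto
        then show "\<bar>B i' j * v j\<bar> \<le> \<bar>B i' j\<bar>" by (simp add: abs_mult mult_left_le)
      qed
      also have "\<dots> \<le> (\<Sum>i\<in>I. \<Sum>j\<in>I. \<bar>B i j\<bar>)"
        using fin i' by (intro member_le_sum) (auto intro: sum_nonneg)
      finally show ?thesis .
    qed
    then show "t \<le> (\<Sum>i\<in>I. \<Sum>j\<in>I. \<bar>B i j\<bar>)" unfolding t using fin ne by (subst Max_le_iff) auto
  qed
  define v0 where "v0 j = sgn (B i j)" for j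
  have v0: "\<forall>i\<in>I. \<bar>v0 i\<bar> \<le> 1" unfolding v0_def by (simp add: abs_sgn_eq)
  have "(\<Sum>j\<in>I. \<bar>B i j\<bar>) = \<bar>\<Sum>j\<in>I. B i j * v0 j\<bar>"
  proof -
    have "(\<Sum>j\<in>I. B i j * v0 j) = (\<Sum>j\<in>I. \<bar>B i j\<bar>)"
      unfolding v0_def by (intro sum.cong refl) (simp add: sgn_if)
    then show ?thesis by (simp add: sum_nonneg)
  qed
  also have "\<dots> \<le> Max ((\<lambda>i. \<bar>\<Sum>j\<in>I. B i j * v0 j\<bar>) ` I)" using fin i by (intro Max_ge) auto
  also have "\<dots> \<le> Sup Sv" using bdd v0 unfolding Sv_def by (intro cSup_upper) auto
  finally show ?thesis unfolding linf_opnorm_def Sv_def .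
qed

lemma congr_bound:
  fixes B M :: "'i \<Rightarrow> 'i \<Rightarrow> real"
  assumes fin: "finite I" and i: "i \<in> I" and j: "j \<in> I" and Mb: "\<forall>p\<in>I. \<forall>q\<in>I. \<bar>M p q\<bar> \<le> c"
  shows "\<bar>congr I B M i j\<bar> \<le> (linf_opnorm I B)\<^sup>2 * c"
proof -
  have c: "0 \<le> c" using Mb i by force
  have "\<bar>congr I B M i j\<bar> \<le> (\<Sum>p\<in>I. \<Sum>q\<in>I. \<bar>B i p\<bar> * c * \<bar>B j q\<bar>)"
    unfolding congr_def
  proof (rule order_trans[OF sum_abs], rule sum_mono, rule order_trans[OF sum_abs], rule sum_mono)
    fix p q assume "p \<in> I" "q \<in> I"
    then have "\<bar>M p q\<bar> \<le> c" using Mb by auto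
    then show "\<bar>B i p * M p q * B j q\<bar> \<le> \<bar>B i p\<bar> * c * \<bar>B j q\<bar>"
      by (simp add: abs_mult mult_left_mono mult_right_mono)
  qed
  also have "\<dots> = (\<Sum>p\<in>I. \<bar>B i p\<bar> * (c * (\<Sum>q\<in>I. \<bar>B j q\<bar>)))"
    by (simp add: sum_distrib_left mult.assoc)
  also have "\<dots> = (\<Sum>p\<in>I. \<bar>B i p\<bar>) * (c * (\<Sum>q\<in>I. \<bar>B j q\<bar>))"
    by (simp add: sum_distrib_right)
  also have "\<dots> = c * ((\<Sum>p\<in>I. \<bar>B i p\<bar>) * (\<Sum>q\<in>I. \<bar>B j q\<bar>))"
    by (simp add: algebra_simps)
  also have "\<dots> \<le> c * (linf_opnorm I B * linf_opnorm I B)"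
    by (intro mult_left_mono mult_mono opnorm_row fin i j c) (auto intro: sum_nonneg order_trans[OF _ opnorm_row[OF fin i]])
  finally show ?thesis by (simp add: power2_eq_square algebra_simps)
qed

lemma congr_diff: "congr I B M i j - congr I B N i j = congr I B (\<lambda>p q. M p q - N p q) i j"
  unfolding congr_def by (simp add: sum_subtractf[symmetric] algebra_simps)

lemma shift_sum: "(\<Sum>k=1..n. g (k - 1)) = (\<Sum>k<n. (g :: nat \<Rightarrow> real) k)"
  by (induction n) auto

lemma sum_X: "(\<Sum>x\<in>Xset S A. F x) = (\<Sum>s\<in>S. \<Sum>a\<in>A. \<Sum>s'\<in>S. F (s, a, s'))"
  unfolding Xset_def by (simp add: sum.cartesian_product)

lemma finX: "finite S \<Longrightarrow> finite A \<Longrightarrow> finite (Xset S A)"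
  unfolding Xset_def by simp

lemma Pbar_nn: "finite_mdp S A P r \<gamma> pib \<Longrightarrow> x \<in> Xset S A \<Longrightarrow> y \<in> Xset S A \<Longrightarrow> 0 \<le> Pbar P pib x y"
  unfolding finite_mdp_def Xset_def Pbar_def by (auto split: prod.splits)

lemma Pbar_sum:
  assumes mdp: "finite_mdp S A P r \<gamma> pib" and x: "x \<in> Xset S A"
  shows "(\<Sum>y\<in>Xset S A. Pbar P pib x y) = 1"
proof -
  obtain s1 a1 s1' where xe: "x = (s1, a1, s1')" by (cases x) auto
  have s1': "s1' \<in> S" using x xe unfolding Xset_def by auto
  have "(\<Sum>y\<in>Xset S A. Pbar P pib x y) = (\<Sum>s\<in>S. \<Sum>a\<in>A. \<Sum>s'\<in>S. (if s = s1' then pib s a * P s a s' else 0))"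
    unfolding sum_X xe Pbar_def by simp
  also have "\<dots> = (\<Sum>s\<in>S. if s = s1' then (\<Sum>a\<in>A. pib s a * (\<Sum>s'\<in>S. P s a s')) else 0)"
    by (intro sum.cong refl) (auto simp: sum_distrib_left)
  also have "\<dots> = (\<Sum>a\<in>A. pib s1' a * (\<Sum>s'\<in>S. P s1' a s'))"
    using mdp s1' unfolding finite_mdp_def by (simp add: sum.delta')
  also have "\<dots> = 1" using mdp s1' unfolding finite_mdp_def by simp
  finally show ?thesis .
qed

lemma mubar_stat:
  assumes mdp: "finite_mdp S A P r \<gamma> pib" and st: "stationary_sa S A P pib \<mu>" and y: "y \<in> Xset S A"
  shows "(\<Sum>x\<in>Xset S A. mubar P \<mu> x * Pbar P pib x y) = mubar P \<mu> y"
proof -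
  obtain s2 a2 s2' where ye: "y = (s2, a2, s2')" by (cases y) auto
  have s2: "s2 \<in> S" "a2 \<in> A" using y ye unfolding Xset_def by auto
  have "(\<Sum>x\<in>Xset S A. mubar P \<mu> x * Pbar P pib x y)
      = (\<Sum>s\<in>S. \<Sum>a\<in>A. \<Sum>s'\<in>S. \<mu> (s, a) * P s a s' * (if s2 = s' then pib s2 a2 * P s2 a2 s2' else 0))"
    unfolding sum_X ye Pbar_def mubar_def by simp
  also have "\<dots> = (\<Sum>s\<in>S. \<Sum>a\<in>A. \<mu> (s, a) * P s a s2 * pib s2 a2 * P s2 a2 s2')"
    using mdp s2 unfolding finite_mdp_def
    by (intro sum.cong refl) (simp add: if_distrib sum.delta cong: if_cong)
  also have "\<dots> = (\<Sum>s\<in>S. \<Sum>a\<in>A. \<mu> (s, a) * P s a s2 * pib s2 a2) * P s2 a2 s2'"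
    by (simp add: sum_distrib_right)
  also have "\<dots> = (\<Sum>(s, a)\<in>S \<times> A. \<mu> (s, a) * P s a s2 * pib s2 a2) * P s2 a2 s2'"
    by (simp add: sum.cartesian_product)
  also have "\<dots> = \<mu> (s2, a2) * P s2 a2 s2'"
    using st s2 unfolding stationary_sa_def by simp
  finally show ?thesis unfolding ye mubar_def by simp
qed

lemma Q_bounds:
  assumes mdp: "finite_mdp S A P r \<gamma> pib" and opt: "is_optimal_Q S A P r \<gamma> Q"
  shows "\<forall>s\<in>S. \<forall>a\<in>A. 0 \<le> Q s a \<and> Q s a \<le> 1 / (1 - \<gamma>)"
proof -
  from mdp have fS: "finite S" and fA: "finite A" and neS: "S \<noteq> {}" and neA: "A \<noteq> {}"
    and g0: "0 < \<gamma>" and g1: "\<gamma> < 1" and rb: "\<forall>s\<in>S. \<forall>a\<in>A. 0 \<le> r s a \<and> r s a \<le> 1"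
    and Pp: "\<forall>s\<in>S. \<forall>a\<in>A. (\<forall>s'\<in>S. 0 \<le> P s a s') \<and> (\<Sum>s'\<in>S. P s a s') = 1"
    unfolding finite_mdp_def by auto
  define W where "W = (\<lambda>(s, a). Q s a) ` (S \<times> A)"
  have fW: "finite W" "W \<noteq> {}" unfolding W_def using fS fA neS neA by auto
  define U where "U = Max W"
  define L where "L = Min W"
  have QU: "Q s a \<le> U" "L \<le> Q s a" if "s \<in> S" "a \<in> A" for s a
    unfolding U_def L_def W_def using fW that by (auto simp: W_def intro!: Max_ge Min_le)
  have VU: "Max ((\<lambda>a. Q s a) ` A) \<le> U" "L \<le> Max ((\<lambda>a. Q s a) ` A)" if "s \<in> S" for s
  proof -
    show "Max ((\<lambda>a. Q s a) ` A) \<le> U" using fA neA QU that by (subst Max_le_iff) auto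
    obtain a where "a \<in> A" using neA by auto
    then have "Q s a \<le> Max ((\<lambda>a. Q s a) ` A)" using fA by (intro Max_ge) auto
    then show "L \<le> Max ((\<lambda>a. Q s a) ` A)" using QU[OF that \<open>a \<in> A\<close>] by linarith
  qed
  have eq: "Q s a = r s a + \<gamma> * (\<Sum>s'\<in>S. P s a s' * Max ((\<lambda>a'. Q s' a') ` A))" if "s \<in> S" "a \<in> A" for s a
    using opt that unfolding is_optimal_Q_def by auto
  have up: "Q s a \<le> 1 + \<gamma> * U" if sa: "s \<in> S" "a \<in> A" for s a
  proof -
    have "(\<Sum>s'\<in>S. P s a s' * Max ((\<lambda>a'. Q s' a') ` A)) \<le> (\<Sum>s'\<in>S. P s a s' * U)"
      using Pp sa VU by (intro sum_mono mult_left_mono) auto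
    also have "\<dots> = U" using Pp sa by (simp add: sum_distrib_right[symmetric])
    finally have "\<gamma> * (\<Sum>s'\<in>S. P s a s' * Max ((\<lambda>a'. Q s' a') ` A)) \<le> \<gamma> * U"
      using g0 by (intro mult_left_mono) auto
    then show ?thesis using eq[OF sa] rb sa by force
  qed
  have lo: "\<gamma> * L \<le> Q s a" if sa: "s \<in> S" "a \<in> A" for s a
  proof -
    have "(\<Sum>s'\<in>S. P s a s' * L) \<le> (\<Sum>s'\<in>S. P s a s' * Max ((\<lambda>a'. Q s' a') ` A))"
      using Pp sa VU by (intro sum_mono mult_left_mono) auto
    moreover have "(\<Sum>s'\<in>S. P s a s' * L) = L" using Pp sa by (simp add: sum_distrib_right[symmetric])
    ultimately have "\<gamma> * L \<le> \<gamma> * (\<Sum>s'\<in>S. P s a s' * Max ((\<lambda>a'. Q s' a') ` A))"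
      using g0 by (intro mult_left_mono) auto
    then show ?thesis using eq[OF sa] rb sa by force
  qed
  have "U \<in> W" "L \<in> W" unfolding U_def L_def using fW by auto
  then obtain s0 a0 s1 a1 where s0: "s0 \<in> S" "a0 \<in> A" "U = Q s0 a0" and s1: "s1 \<in> S" "a1 \<in> A" "L = Q s1 a1"
    unfolding W_def by auto
  have "U \<le> 1 + \<gamma> * U" using up[OF s0(1,2)] s0(3) by simp
  then have "U * (1 - \<gamma>) \<le> 1" by (simp add: algebra_simps)
  then have Ub: "U \<le> 1 / (1 - \<gamma>)" using g1 by (simp add: field_simps)
  have "\<gamma> * L \<le> L" using lo[OF s1(1,2)] s1(3) by simp
  then have "0 \<le> (1 - \<gamma>) * L" by (simp add: algebra_simps)
  then have Lb: "0 \<le> L" using g1 by (simp add: zero_le_mult_iff)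
  show ?thesis
  proof (intro ballI conjI)
    fix s a assume "s \<in> S" "a \<in> A"
    then show "0 \<le> Q s a" "Q s a \<le> 1 / (1 - \<gamma>)" using QU[of s a] Ub Lb by linarith+
  qed
qed

lemma eps_bound:
  assumes mdp: "finite_mdp S A P r \<gamma> pib" and opt: "is_optimal_Q S A P r \<gamma> Q" and x: "x \<in> Xset S A"
  shows "\<bar>eps A r \<gamma> Q x j\<bar> \<le> 1 / (1 - \<gamma>)"
proof -
  obtain s a s' where xe: "x = (s, a, s')" by (cases x) auto
  have sa: "s \<in> S" "a \<in> A" "s' \<in> S" using x xe unfolding Xset_def by auto
  from mdp have fA: "finite A" and neA: "A \<noteq> {}" and g0: "0 < \<gamma>" and g1: "\<gamma> < 1"
    and rb: "0 \<le> r s a" "r s a \<le> 1" using sa unfolding finite_mdp_def by auto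
  have Qb: "0 \<le> Q s a" "Q s a \<le> 1 / (1 - \<gamma>)" using Q_bounds[OF mdp opt] sa by auto
  have Vb: "0 \<le> Vstar A Q s'" "Vstar A Q s' \<le> 1 / (1 - \<gamma>)"
  proof -
    show "Vstar A Q s' \<le> 1 / (1 - \<gamma>)" unfolding Vstar_def using fA neA Q_bounds[OF mdp opt] sa
      by (subst Max_le_iff) auto
    obtain a' where a': "a' \<in> A" using neA by auto
    then have "Q s' a' \<le> Vstar A Q s'" unfolding Vstar_def using fA by (intro Max_ge) auto
    then show "0 \<le> Vstar A Q s'" using Q_bounds[OF mdp opt] sa a' by force
  qed
  have "\<gamma> * Vstar A Q s' \<le> \<gamma> * (1 / (1 - \<gamma>))" using Vb g0 by (intro mult_left_mono) auto
  moreover have "1 + \<gamma> * (1 / (1 - \<gamma>)) = 1 / (1 - \<gamma>)" using g1 by (simp add: field_simps)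
  moreover have "0 \<le> \<gamma> * Vstar A Q s'" using Vb g0 by simp
  ultimately show ?thesis unfolding eps_def xe using rb Qb g1 by (auto simp: abs_le_iff)
qed

lemma eps_mean:
  assumes mdp: "finite_mdp S A P r \<gamma> pib" and opt: "is_optimal_Q S A P r \<gamma> Q" and j: "j \<in> S \<times> A"
  shows "(\<Sum>x\<in>Xset S A. mubar P \<mu> x * eps A r \<gamma> Q x j) = 0"
proof -
  obtain s0 a0 where je: "j = (s0, a0)" and s0: "s0 \<in> S" "a0 \<in> A" using j by auto
  from mdp have fS: "finite S" and fA: "finite A"
    and Pp: "\<forall>s\<in>S. \<forall>a\<in>A. (\<forall>s'\<in>S. 0 \<le> P s a s') \<and> (\<Sum>s'\<in>S. P s a s') = 1"
    unfolding finite_mdp_def by auto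
  have "(\<Sum>x\<in>Xset S A. mubar P \<mu> x * eps A r \<gamma> Q x j)
     = (\<Sum>s\<in>S. \<Sum>a\<in>A. \<Sum>s'\<in>S. \<mu> (s, a) * P s a s' * (if (s0, a0) = (s, a) then r s a + \<gamma> * Vstar A Q s' - Q s a else 0))"
    unfolding sum_X mubar_def eps_def je by simp
  also have "\<dots> = (\<Sum>s\<in>S. \<Sum>a\<in>A. if (s0, a0) = (s, a) then \<mu> (s, a) * (\<Sum>s'\<in>S. P s a s' * (r s a + \<gamma> * Vstar A Q s' - Q s a)) else 0)"
    by (intro sum.cong refl) (auto simp: sum_distrib_left mult.assoc)
  also have "\<dots> = \<mu> (s0, a0) * (\<Sum>s'\<in>S. P s0 a0 s' * (r s0 a0 + \<gamma> * Vstar A Q s' - Q s0 a0))"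
  proof -
    have "(\<Sum>s\<in>S. \<Sum>a\<in>A. if (s0, a0) = (s, a) then \<mu> (s, a) * (\<Sum>s'\<in>S. P s a s' * (r s a + \<gamma> * Vstar A Q s' - Q s a)) else 0)
      = (\<Sum>s\<in>S. if s0 = s then (\<Sum>a\<in>A. if a0 = a then \<mu> (s, a) * (\<Sum>s'\<in>S. P s a s' * (r s a + \<gamma> * Vstar A Q s' - Q s a)) else 0) else 0)"
      by (intro sum.cong refl) auto
    then show ?thesis using fS fA s0 by (simp add: sum.delta' sum.delta)
  qed
  also have "(\<Sum>s'\<in>S. P s0 a0 s' * (r s0 a0 + \<gamma> * Vstar A Q s' - Q s0 a0))
      = r s0 a0 * (\<Sum>s'\<in>S. P s0 a0 s') + \<gamma> * (\<Sum>s'\<in>S. P s0 a0 s' * Vstar A Q s') - Q s0 a0 * (\<Sum>s'\<in>S. P s0 a0 s')"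
    by (simp add: sum.distrib sum_subtractf sum_distrib_left sum_distrib_right algebra_simps)
  also have "\<dots> = 0"
    using Pp s0 opt unfolding is_optimal_Q_def Vstar_def by auto
  finally show ?thesis by simp
qed

theorem lemmaB6:
  shows "\<exists>C::real. \<forall>S A P r \<gamma> pib Q \<mu> tmix \<nu> (n::nat).
     finite_mdp S A P r \<gamma> pib \<and>
     is_optimal_Q S A P r \<gamma> Q \<and>
     stationary_sa S A P pib \<mu> \<and>
     mixing S A P pib \<mu> tmix \<and>
     unique_opt_policy S A Q \<and>
     is_distr (Xset S A) \<nu> \<and>
     1 \<le> n
     \<longrightarrow> chnorm (S \<times> A) (\<lambda>i j. Sigma_n S A P r \<gamma> pib Q \<mu> \<nu> n i j - Sigma_inf S A P r \<gamma> pib Q \<mu> i j)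
         \<le> C * (linf_opnorm (S \<times> A) (minv (S \<times> A) (Gmat A P \<gamma> Q \<mu>)))\<^sup>2 * (real tmix) ^ 3
             / (real n * (1 - \<gamma>)\<^sup>2)"
proof (intro exI[of _ 256] allI impI)
  fix S A P r \<gamma> pib Q \<mu> tmix \<nu> and n :: nat
  assume H: "finite_mdp S A P r \<gamma> pib \<and>
     is_optimal_Q S A P r \<gamma> Q \<and>
     stationary_sa S A P pib \<mu> \<and>
     mixing S A P pib \<mu> tmix \<and>
     unique_opt_policy S A Q \<and>
     is_distr (Xset S A) \<nu> \<and>
     1 \<le> n"
  then have mdp: "finite_mdp S A P r \<gamma> pib" and opt: "is_optimal_Q S A P r \<gamma> Q"
    and st: "stationary_sa S A P pib \<mu>" and mx: "mixing S A P pib \<mu> tmix"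
    and nu: "is_distr (Xset S A) \<nu>" and n1: "1 \<le> n" by auto
  from mdp have fS: "finite S" and fA: "finite A" and neS: "S \<noteq> {}" and neA: "A \<noteq> {}"
    and g1: "\<gamma> < 1" unfolding finite_mdp_def by auto
  define X where "X = Xset S A"
  define K where "K = Pbar P pib"
  define m where "m = mubar P \<mu>"
  define I where "I = S \<times> A"
  define Bm where "Bm = minv I (Gmat A P \<gamma> Q \<mu>)"
  define L where "L = linf_opnorm I Bm"
  define Mb where "Mb = 1 / (1 - \<gamma>)"
  define \<tau> where "\<tau> = tmix"
  have fI: "finite I" and neI: "I \<noteq> {}" unfolding I_def using fS fA neS neA by auto
  have tau: "0 < \<tau>" using mx unfolding mixing_def \<tau>_def by auto
  interpret M: mc X K m \<tau>
  proof
    show "finite X" unfolding X_def using finX fS fA by blast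
    show "0 \<le> K x y" if "x \<in> X" "y \<in> X" for x y using Pbar_nn[OF mdp] that unfolding X_def K_def by blast
    show "(\<Sum>y\<in>X. K x y) = 1" if "x \<in> X" for x using Pbar_sum[OF mdp] that unfolding X_def K_def by blast
    show "(\<Sum>x\<in>X. m x * K x y) = m y" if "y \<in> X" for y using mubar_stat[OF mdp st] that unfolding X_def K_def m_def by blast
    show "(\<Sum>y\<in>X. \<bar>kpow X K t x y - m y\<bar>) \<le> 2 * (1/4)^(t div \<tau>)" if "x \<in> X" for t x
      using mx that unfolding mixing_def dtv_def X_def K_def m_def \<tau>_def by (auto simp: mult.commute)
    show "0 < \<tau>" by (rule tau)
  qed
  define f where "f p = (\<lambda>y. eps A r \<gamma> Q y p)" for p
  have fb: "\<forall>y\<in>X. \<bar>f p y\<bar> \<le> Mb" for p unfolding f_def X_def Mb_def using eps_bound[OF mdp opt] by blast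
  have f0: "(\<Sum>y\<in>X. m y * f p y) = 0" if "p \<in> I" for p
    unfolding f_def X_def m_def using eps_mean[OF mdp opt] that I_def by blast
  have gfeq: "gfun S A P r \<gamma> pib Q y p = M.gf (f p) y" for y p
    unfolding gfun_def M.gf_def by (simp add: X_def K_def f_def)
  have Pgeq: "Pg S A P r \<gamma> pib Q x p = M.Pgf (f p) x" for x p
    unfolding Pg_def M.Pgf_def gfeq by (simp add: X_def K_def)
  have Ekeq: "Ek S A P r \<gamma> pib Q \<nu> k p q = (\<Sum>x\<in>X. law S A P pib \<nu> (k - 1) x * M.FF (f p) (f q) x)" for k p q
    unfolding Ek_def M.FF_def gfeq Pgeq by (simp add: sum_distrib_left mult.assoc X_def K_def)
  have Seq: "Sigma_eps S A P r \<gamma> pib Q \<mu> p q = (\<Sum>x\<in>X. m x * M.FF (f p) (f q) x)" if "p \<in> I" "q \<in> I" for p q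
    using M.stat_id[OF fb f0[OF that(1)] fb f0[OF that(2)]] unfolding Sigma_eps_def X_def K_def m_def f_def by simp
  define c where "c k = 2 * (1/4::real)^((k - 1) div \<tau>) * (8 * Mb * \<tau>)\<^sup>2" for k
  have Dk: "\<bar>Ek S A P r \<gamma> pib Q \<nu> k p q - Sigma_eps S A P r \<gamma> pib Q \<mu> p q\<bar> \<le> c k" if "p \<in> I" "q \<in> I" for k p q
  proof -
    have FB: "\<forall>x\<in>X. \<bar>M.FF (f p) (f q) x\<bar> \<le> (8 * Mb * \<tau>)\<^sup>2"
      using M.FF_bound[OF fb f0[OF that(1)] fb f0[OF that(2)]] by blast
    have nn: "\<forall>x\<in>X. 0 \<le> \<nu> x" and s1: "(\<Sum>x\<in>X. \<nu> x) = 1" using nu unfolding is_distr_def X_def by auto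
    have "\<bar>Ek S A P r \<gamma> pib Q \<nu> k p q - Sigma_eps S A P r \<gamma> pib Q \<mu> p q\<bar>
        \<le> (\<Sum>x\<in>X. \<bar>law S A P pib \<nu> (k - 1) x - m x\<bar>) * (8 * Mb * \<tau>)\<^sup>2"
      unfolding Ekeq Seq[OF that] by (rule E_diff[OF FB])
    also have "\<dots> \<le> (2 * (1/4)^((k - 1) div \<tau>)) * (8 * Mb * \<tau>)\<^sup>2"
      using M.law_diff[OF nn s1, of "k - 1"] unfolding law_def X_def K_def by (intro mult_right_mono) auto
    finally show ?thesis unfolding c_def by simp
  qed
  have main: "\<bar>Sigma_n S A P r \<gamma> pib Q \<mu> \<nu> n i j - Sigma_inf S A P r \<gamma> pib Q \<mu> i j\<bar>
      \<le> 256 * L\<^sup>2 * (real tmix) ^ 3 / (real n * (1 - \<gamma>)\<^sup>2)" if ij: "i \<in> I" "j \<in> I" for i j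
  proof -
    define Se where "Se = Sigma_eps S A P r \<gamma> pib Q \<mu>"
    define E where "E k = Ek S A P r \<gamma> pib Q \<nu> k" for k
    have n0: "0 < real n" using n1 by simp
    have "Sigma_inf S A P r \<gamma> pib Q \<mu> i j = (1 / real n) * (\<Sum>k=1..n. congr I Bm Se i j)"
      unfolding Sigma_inf_def Se_def Bm_def I_def using n0 by simp
    then have "Sigma_n S A P r \<gamma> pib Q \<mu> \<nu> n i j - Sigma_inf S A P r \<gamma> pib Q \<mu> i j
        = (1 / real n) * (\<Sum>k=1..n. congr I Bm (E k) i j - congr I Bm Se i j)"
      unfolding Sigma_n_def E_def Bm_def I_def by (simp add: sum_subtractf right_diff_distrib)
    also have "\<dots> = (1 / real n) * (\<Sum>k=1..n. congr I Bm (\<lambda>p q. E k p q - Se p q) i j)"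
      by (simp add: congr_diff)
    finally have eq: "Sigma_n S A P r \<gamma> pib Q \<mu> \<nu> n i j - Sigma_inf S A P r \<gamma> pib Q \<mu> i j
        = (1 / real n) * (\<Sum>k=1..n. congr I Bm (\<lambda>p q. E k p q - Se p q) i j)" .
    have "\<bar>\<Sum>k=1..n. congr I Bm (\<lambda>p q. E k p q - Se p q) i j\<bar> \<le> (\<Sum>k=1..n. L\<^sup>2 * c k)"
      by (rule order_trans[OF sum_abs], rule sum_mono, unfold L_def, rule congr_bound[OF fI ij])
         (use Dk in \<open>auto simp: E_def Se_def\<close>)
    also have "\<dots> = L\<^sup>2 * (2 * (8 * Mb * \<tau>)\<^sup>2) * (\<Sum>k=1..n. (1/4::real)^((k - 1) div \<tau>))"
      unfolding c_def by (simp add: sum_distrib_left algebra_simps)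
    also have "(\<Sum>k=1..n. (1/4::real)^((k - 1) div \<tau>)) = (\<Sum>k<n. (1/4::real)^(k div \<tau>))"
      by (rule shift_sum)
    also have "L\<^sup>2 * (2 * (8 * Mb * \<tau>)\<^sup>2) * \<dots> \<le> L\<^sup>2 * (2 * (8 * Mb * \<tau>)\<^sup>2) * (2 * real \<tau>)"
      by (intro mult_left_mono geo_partial tau) auto
    finally have b: "\<bar>\<Sum>k=1..n. congr I Bm (\<lambda>p q. E k p q - Se p q) i j\<bar> \<le> L\<^sup>2 * (2 * (8 * Mb * \<tau>)\<^sup>2) * (2 * real \<tau>)" .
    have "\<bar>Sigma_n S A P r \<gamma> pib Q \<mu> \<nu> n i j - Sigma_inf S A P r \<gamma> pib Q \<mu> i j\<bar>
        \<le> (1 / real n) * (L\<^sup>2 * (2 * (8 * Mb * \<tau>)\<^sup>2) * (2 * real \<tau>))"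
      unfolding eq using b n0 by (simp add: abs_mult divide_right_mono)
    also have "\<dots> = 256 * L\<^sup>2 * (real tmix) ^ 3 / (real n * (1 - \<gamma>)\<^sup>2)"
      unfolding Mb_def \<tau>_def using g1 n0 by (simp add: field_simps power2_eq_square power3_eq_cube)
    finally show ?thesis .
  qed
  show "chnorm (S \<times> A) (\<lambda>i j. Sigma_n S A P r \<gamma> pib Q \<mu> \<nu> n i j - Sigma_inf S A P r \<gamma> pib Q \<mu> i j)
         \<le> 256 * (linf_opnorm (S \<times> A) (minv (S \<times> A) (Gmat A P \<gamma> Q \<mu>)))\<^sup>2 * (real tmix) ^ 3
             / (real n * (1 - \<gamma>)\<^sup>2)"
    unfolding chnorm_def using fI neI main unfolding I_def L_def Bm_def
    by (subst Max_le_iff) auto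
qed

end
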